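(* Let $G_n$ be probability distributions on $\mathbb{R}$ with densities $g_n$, let $\ell_n=\log\frac{g_n}{\varphi}$ with $\varphi$ the standard normal density, and suppose that for some measurable $\alpha:\mathbb{R}\to\mathbb{R}$, $$\lim_{n\to\infty}\frac{\ell_n(u\sqrt{2\log n})}{\log n}=\alpha(u)$$ uniformly in $u\in\mathbb{R}$. Then $$\lim_{t\to\infty}\frac1t\log\int_{\mathbb{R}}\exp\big(t(\alpha(u)-u^2)\big)\,du=0.$$ In particular, $\alpha(u)\le u^2$ for Lebesgue-almost every $u$. Conversely, for every measurable $\alpha$ satisfying the displayed limit relation for the integral, there exists a sequence of distributions $\{G_n\}$ with densities such that the uniform convergence above holds. Additionally, if $G_n=P_n*\mathcal{N}(0,1)$ for some probability distributions $P_n$ (convolutional model), then $\alpha$ is convex.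
   Context: $*$ denotes convolution of distributions. Uniform convergence means $\sup_{u\in\mathbb{R}}\big|\frac{\ell_n(u\sqrt{2\log n})}{\log n}-\alpha(u)\big|\to0$. *)

theory Defs
  imports "HOL-Probability.Probability"
begin

definition is_prob_density :: "(real \<Rightarrow> real) \<Rightarrow> bool" where
  "is_prob_density g \<longleftrightarrow> g \<in> borel_measurable borel \<and> (\<forall>x. 0 \<le> g x) \<and>
     (\<integral>\<^sup>+ x. ennreal (g x) \<partial>lborel) = 1"

definition llr :: "(real \<Rightarrow> real) \<Rightarrow> real \<Rightarrow> real" where
  "llr g x = ln (g x / std_normal_density x)"

text \<open>Uniform convergence sup_u | l_n(u sqrt(2 log n)) / log n - alpha u | \<longrightarrow> 0.
  Positivity of g_n at the evaluation points is required, since l_n must be finite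
  (log 0 = -infinity would make the supremum infinite).\<close>
definition unif_conv :: "(nat \<Rightarrow> real \<Rightarrow> real) \<Rightarrow> (real \<Rightarrow> real) \<Rightarrow> bool" where
  "unif_conv g \<alpha> \<longleftrightarrow> (\<forall>\<epsilon>>0. \<forall>\<^sub>F n in sequentially. \<forall>u::real.
      g n (u * sqrt (2 * ln (real n))) > 0 \<and>
      \<bar>llr (g n) (u * sqrt (2 * ln (real n))) / ln (real n) - \<alpha> u\<bar> < \<epsilon>)"

definition int_limit :: "(real \<Rightarrow> real) \<Rightarrow> bool" where
  "int_limit \<alpha> \<longleftrightarrow>
     (\<forall>\<^sub>F t in at_top. integrable lborel (\<lambda>u. exp (t * (\<alpha> u - u\<^sup>2)))) \<and>
     ((\<lambda>t. ln (\<integral>u. exp (t * (\<alpha> u - u\<^sup>2)) \<partial>lborel) / t) \<longlongrightarrow> 0) at_top"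

end

theory Submission
  imports Defs "HOL-Real_Asymp.Real_Asymp"
begin


lemma normal_ratio: fixes x y :: real shows "std_normal_density (x - y) / std_normal_density x = exp (x*y - y\<^sup>2/2)"
proof -
  have "std_normal_density (x - y) / std_normal_density x = exp (- (x-y)\<^sup>2/2) / exp (- x\<^sup>2/2)"
    by (simp add: std_normal_density_def)
  also have "\<dots> = exp (- (x-y)\<^sup>2/2 - (- x\<^sup>2/2))" by (rule exp_diff[symmetric])
  also have "- (x-y)\<^sup>2/2 - (- x\<^sup>2/2) = x*y - y\<^sup>2/2" by (simp add: power2_eq_square field_simps)
  finally show ?thesis .
qed

lemma exp_bound_aux: fixes x y :: real shows "exp (x*y - y\<^sup>2/2) \<le> exp (x\<^sup>2/2)"
proof -
  have "x*y - y\<^sup>2/2 \<le> x\<^sup>2/2" using sum_squares_ge_zero[of "x-y" 0]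
    by (simp add: power2_eq_square algebra_simps)
  then show ?thesis by simp
qed

context
  fixes P :: "real measure"
  assumes P: "prob_space P" and sP: "sets P = sets borel"
begin

lemma mP: "f \<in> borel_measurable borel \<Longrightarrow> f \<in> borel_measurable P"
  using measurable_cong_sets[OF sP refl, of borel] by blast

lemma int_G: "integrable P (\<lambda>y. exp (x*y - y\<^sup>2/2))"
  apply (rule finite_measure.integrable_const_bound[where B="exp (x\<^sup>2/2)"])
  using P apply (simp add: prob_space_def)
  using exp_bound_aux apply simp
  by (rule mP) simp

lemma G_pos: "0 < (\<integral>y. exp (x*y - y\<^sup>2/2) \<partial>P)"
proof -
  have nn: "0 \<le> (\<integral>y. exp (x*y - y\<^sup>2/2) \<partial>P)" by (rule integral_nonneg_AE) simp
  have "(\<integral>y. exp (x*y - y\<^sup>2/2) \<partial>P) \<noteq> 0"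
  proof
    assume "(\<integral>y. exp (x*y - y\<^sup>2/2) \<partial>P) = 0"
    then have "AE y in P. exp (x*y - y\<^sup>2/2) = 0"
      using integral_nonneg_eq_0_iff_AE[OF int_G] by simp
    then have "AE y in P. False" by simp
    then show False using P prob_space.AE_False by blast
  qed
  with nn show ?thesis by linarith
qed

lemma holder_G:
  assumes l: "0 \<le> l" "l \<le> 1"
  shows "ln (\<integral>y. exp (((1-l)*x1 + l*x2)*y - y\<^sup>2/2) \<partial>P)
     \<le> (1-l) * ln (\<integral>y. exp (x1*y - y\<^sup>2/2) \<partial>P) + l * ln (\<integral>y. exp (x2*y - y\<^sup>2/2) \<partial>P)"
proof -
  define A where "A = (\<integral>y. exp (x1*y - y\<^sup>2/2) \<partial>P)"
  define B where "B = (\<integral>y. exp (x2*y - y\<^sup>2/2) \<partial>P)"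
  define C where "C = (\<integral>y. exp (((1-l)*x1 + l*x2)*y - y\<^sup>2/2) \<partial>P)"
  have A: "A > 0" unfolding A_def by (rule G_pos)
  have B: "B > 0" unfolding B_def by (rule G_pos)
  have C: "C > 0" unfolding C_def by (rule G_pos)
  define K where "K = (1-l) * ln A + l * ln B"
  have pw: "exp (((1-l)*x1 + l*x2)*y - y\<^sup>2/2) * exp (- K)
      \<le> (1-l) * (exp (x1*y - y\<^sup>2/2) / A) + l * (exp (x2*y - y\<^sup>2/2) / B)" for y
  proof -
    have "exp (((1-l)*x1 + l*x2)*y - y\<^sup>2/2) * exp (- K)
        = exp ((1-l) * (x1*y - y\<^sup>2/2 - ln A) + l * (x2*y - y\<^sup>2/2 - ln B))"
      by (simp add: K_def exp_add[symmetric] algebra_simps power2_eq_square) (simp add: field_simps)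
    also have "\<dots> \<le> (1-l) * exp (x1*y - y\<^sup>2/2 - ln A) + l * exp (x2*y - y\<^sup>2/2 - ln B)"
      using convex_onD[OF exp_convex, of l "x1*y - y\<^sup>2/2 - ln A" "x2*y - y\<^sup>2/2 - ln B"] l
      by simp
    also have "\<dots> = (1-l) * (exp (x1*y - y\<^sup>2/2) / A) + l * (exp (x2*y - y\<^sup>2/2) / B)"
      using A B by (simp add: exp_diff)
    finally show ?thesis .
  qed
  have "C * exp (- K) = (\<integral>y. exp (((1-l)*x1 + l*x2)*y - y\<^sup>2/2) * exp (- K) \<partial>P)"
    unfolding C_def by simp
  also have "\<dots> \<le> (\<integral>y. (1-l) * (exp (x1*y - y\<^sup>2/2) / A) + l * (exp (x2*y - y\<^sup>2/2) / B) \<partial>P)"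
    by (rule integral_mono) (use pw int_G in auto)
  also have "\<dots> = (1-l) * (A / A) + l * (B / B)"
    using int_G by (simp add: A_def B_def)
  also have "\<dots> = 1" using A B by simp
  finally have "C * exp (- K) \<le> 1" .
  then have "C \<le> exp K" by (simp add: exp_minus field_simps)
  then have "ln C \<le> K" using C by (metis ln_exp ln_le_cancel_iff exp_gt_zero)
  then show ?thesis unfolding C_def K_def A_def B_def .
qed

lemma llr_convex_step:
  assumes g: "\<And>x. gx x = (\<integral>y. std_normal_density (x - y) \<partial>P)"
    and l: "0 \<le> l" "l \<le> 1"
  shows "llr gx ((1-l)*x1 + l*x2) \<le> (1-l) * llr gx x1 + l * llr gx x2"
proof -
  have eq: "llr gx x = ln (\<integral>y. exp (x*y - y\<^sup>2/2) \<partial>P)" for x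
  proof -
    have "gx x / std_normal_density x = (\<integral>y. std_normal_density (x - y) / std_normal_density x \<partial>P)"
      unfolding g by simp
    also have "\<dots> = (\<integral>y. exp (x*y - y\<^sup>2/2) \<partial>P)" by (simp add: normal_ratio)
    finally show ?thesis by (simp add: llr_def)
  qed
  show ?thesis unfolding eq by (rule holder_G[OF l])
qed

end


lemma sq_scale: fixes u T :: real assumes "T \<ge> 0"
  shows "(u * sqrt (2*T))\<^sup>2 / 2 = T * u\<^sup>2"
  using assms by (simp add: power_mult_distrib)

lemma part1_bounds:
  fixes g :: "nat \<Rightarrow> real \<Rightarrow> real" and \<alpha> :: "real \<Rightarrow> real"
  assumes meas[measurable]: "\<alpha> \<in> borel_measurable borel"
    and dens: "\<forall>n. is_prob_density (g n)" and uc: "unif_conv g \<alpha>" and e: "\<epsilon> > 0"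
  shows "\<exists>N. \<forall>n\<ge>N. n \<ge> 3 \<and> integrable lborel (\<lambda>u. exp (ln (real n) * (\<alpha> u - u\<^sup>2))) \<and>
      sqrt (2*pi) * exp (- \<epsilon> * ln (real n)) / sqrt (2 * ln (real n))
        \<le> (\<integral>u. exp (ln (real n) * (\<alpha> u - u\<^sup>2)) \<partial>lborel) \<and>
      (\<integral>u. exp (ln (real n) * (\<alpha> u - u\<^sup>2)) \<partial>lborel)
        \<le> sqrt (2*pi) * exp (\<epsilon> * ln (real n)) / sqrt (2 * ln (real n))"
proof -
  from uc e obtain N0 where N0: "\<And>n u. n \<ge> N0 \<Longrightarrow> g n (u * sqrt (2 * ln (real n))) > 0 \<and>
      \<bar>llr (g n) (u * sqrt (2 * ln (real n))) / ln (real n) - \<alpha> u\<bar> < \<epsilon>"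
    unfolding unif_conv_def eventually_sequentially by blast
  show ?thesis
  proof (intro exI[of _ "max N0 3"] allI impI)
    fix n assume n: "max N0 3 \<le> n"
    define T where "T = ln (real n)"
    define S where "S = sqrt (2 * T)"
    define c where "c = sqrt (2*pi)"
    have c: "c > 0" unfolding c_def by simp
    have n3: "real n \<ge> 3" using n by simp
    then have "ln (real n) \<ge> ln 3" by simp
    then have T1: "T > 1" unfolding T_def using ln3_gt_1 by linarith
    have S: "S > 0" unfolding S_def using T1 by simp
    have S1: "S \<ge> 1" unfolding S_def using T1 by simp
    have gm[measurable]: "g n \<in> borel_measurable borel" and gnn: "\<And>x. 0 \<le> g n x"
      and gint: "(\<integral>\<^sup>+ x. ennreal (g n x) \<partial>lborel) = 1"
      using dens unfolding is_prob_density_def by auto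
    define G where "G u = g n (u * S)" for u
    have Gm[measurable]: "G \<in> borel_measurable borel" unfolding G_def by measurable
    have "1 = \<bar>S\<bar> * (\<integral>\<^sup>+ x. ennreal (g n (0 + S * x)) \<partial>lborel)"
      using nn_integral_real_affine[of "\<lambda>x. ennreal (g n x)" S 0] S gint by simp
    then have "1 = ennreal S * (\<integral>\<^sup>+ x. ennreal (G x) \<partial>lborel)"
      using S by (simp add: G_def mult.commute)
    then have "ennreal (1/S) * 1 = (ennreal (1/S) * ennreal S) * (\<integral>\<^sup>+ x. ennreal (G x) \<partial>lborel)"
      by (simp add: mult.assoc)
    also have "ennreal (1/S) * ennreal S = 1" using S by (simp add: ennreal_mult[symmetric])
    finally have NG: "(\<integral>\<^sup>+ x. ennreal (G x) \<partial>lborel) = ennreal (1/S)" by simp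
    have Gint: "integrable lborel G"
      apply (rule integrableI_nonneg)
        apply simp
       apply (simp add: G_def gnn)
      by (simp add: NG)
    have IG: "(\<integral>u. G u \<partial>lborel) = 1/S"
    proof -
      have ae: "AE x in lborel. 0 \<le> G x" by (simp add: G_def gnn)
      have "ennreal (\<integral>u. G u \<partial>lborel) = ennreal (1/S)"
        using nn_integral_eq_integral[OF Gint ae] NG by simp
      moreover have "0 \<le> (\<integral>u. G u \<partial>lborel)" using ae by (rule integral_nonneg_AE)
      ultimately show ?thesis using S by simp
    qed
    have pw: "exp (T * (\<alpha> u - u\<^sup>2)) \<le> c * exp (\<epsilon> * T) * G u \<and>
              c * exp (- \<epsilon> * T) * G u \<le> exp (T * (\<alpha> u - u\<^sup>2))" for u
    proof -
      have N: "G u > 0" "\<bar>llr (g n) (u * S) / T - \<alpha> u\<bar> < \<epsilon>"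
        using N0[of n u] n unfolding G_def S_def T_def by auto
      have phi: "std_normal_density (u * S) = exp (- T * u\<^sup>2) / c"
        unfolding std_normal_density_def S_def c_def using T1 sq_scale[of T u] by simp
      have phipos: "std_normal_density (u * S) > 0" using phi c by simp
      define L where "L = llr (g n) (u * S)"
      have GL: "G u = std_normal_density (u * S) * exp L"
        unfolding L_def llr_def G_def using N(1) phipos by (simp add: G_def)
      have Lb: "T * (\<alpha> u - \<epsilon>) \<le> L" "L \<le> T * (\<alpha> u + \<epsilon>)"
      proof -
        have "L / T \<ge> \<alpha> u - \<epsilon>" "L / T \<le> \<alpha> u + \<epsilon>" using N(2) unfolding L_def by auto
        then show "T * (\<alpha> u - \<epsilon>) \<le> L" "L \<le> T * (\<alpha> u + \<epsilon>)" using T1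
          by (auto simp: field_simps)
      qed
      have G_eq: "c * G u = exp (T * (\<alpha> u - u\<^sup>2) + (L - T * \<alpha> u) + T * u\<^sup>2 - T * u\<^sup>2)"
        using GL phi c by (simp add: exp_add[symmetric] algebra_simps)
      have G_eq2: "c * G u = exp (T * (\<alpha> u - u\<^sup>2)) * exp (L - T * \<alpha> u)"
        using G_eq by (simp add: exp_add[symmetric])
      have "exp (T * (\<alpha> u - u\<^sup>2)) \<le> exp (T * (\<alpha> u - u\<^sup>2)) * (exp (\<epsilon> * T) * exp (L - T * \<alpha> u))"
      proof -
        have "0 \<le> \<epsilon> * T + (L - T * \<alpha> u)" using Lb by (simp add: algebra_simps)
        then have "1 \<le> exp (\<epsilon> * T) * exp (L - T * \<alpha> u)" by (simp add: exp_add[symmetric])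
        then show ?thesis by simp
      qed
      also have "\<dots> = c * exp (\<epsilon> * T) * G u" using G_eq2 by (simp add: algebra_simps)
      finally have A: "exp (T * (\<alpha> u - u\<^sup>2)) \<le> c * exp (\<epsilon> * T) * G u" .
      have "c * exp (- \<epsilon> * T) * G u = exp (T * (\<alpha> u - u\<^sup>2)) * (exp (- \<epsilon> * T) * exp (L - T * \<alpha> u))"
        using G_eq2 by (simp add: algebra_simps)
      also have "\<dots> \<le> exp (T * (\<alpha> u - u\<^sup>2))"
      proof -
        have "- \<epsilon> * T + (L - T * \<alpha> u) \<le> 0" using Lb by (simp add: algebra_simps)
        then have "exp (- \<epsilon> * T) * exp (L - T * \<alpha> u) \<le> 1" by (simp add: exp_add[symmetric])
        then show ?thesis by (simp add: mult_left_le)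
      qed
      finally show ?thesis using A by simp
    qed
    have Fint: "integrable lborel (\<lambda>u. exp (T * (\<alpha> u - u\<^sup>2)))"
      apply (rule Bochner_Integration.integrable_bound[where f="\<lambda>u. c * exp (\<epsilon> * T) * G u"])
        apply (intro integrable_mult_right Gint)
       apply measurable
      apply (rule AE_I2)
      subgoal for u using pw[of u] G_def gnn[of "u*S"] c
        by (smt (verit) exp_gt_zero mult_nonneg_nonneg real_norm_def) 
      done
    have up: "(\<integral>u. exp (T * (\<alpha> u - u\<^sup>2)) \<partial>lborel) \<le> c * exp (\<epsilon> * T) / S"
    proof -
      have "(\<integral>u. exp (T * (\<alpha> u - u\<^sup>2)) \<partial>lborel) \<le> (\<integral>u. c * exp (\<epsilon> * T) * G u \<partial>lborel)"
        by (rule integral_mono[OF Fint]) (use pw Gint in auto)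
      also have "\<dots> = c * exp (\<epsilon> * T) / S" using IG by simp
      finally show ?thesis .
    qed
    have lo: "c * exp (- \<epsilon> * T) / S \<le> (\<integral>u. exp (T * (\<alpha> u - u\<^sup>2)) \<partial>lborel)"
    proof -
      have "c * exp (- \<epsilon> * T) / S = (\<integral>u. c * exp (- \<epsilon> * T) * G u \<partial>lborel)" using IG by simp
      also have "\<dots> \<le> (\<integral>u. exp (T * (\<alpha> u - u\<^sup>2)) \<partial>lborel)"
        by (rule integral_mono[OF _ Fint]) (use pw Gint in auto)
      finally show ?thesis .
    qed
    show "n \<ge> 3 \<and> integrable lborel (\<lambda>u. exp (ln (real n) * (\<alpha> u - u\<^sup>2))) \<and>
      sqrt (2*pi) * exp (- \<epsilon> * ln (real n)) / sqrt (2 * ln (real n))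
        \<le> (\<integral>u. exp (ln (real n) * (\<alpha> u - u\<^sup>2)) \<partial>lborel) \<and>
      (\<integral>u. exp (ln (real n) * (\<alpha> u - u\<^sup>2)) \<partial>lborel)
        \<le> sqrt (2*pi) * exp (\<epsilon> * ln (real n)) / sqrt (2 * ln (real n))"
      using n Fint up lo unfolding T_def S_def c_def by auto
  qed
qed




lemma eqc: fixes c d T :: real shows "c * exp ((d/2) * T) = exp (d * T) * (c * exp (- (d/2) * T))"
proof -
  have "exp ((d/2) * T) = exp (d * T + (- (d/2) * T))" by (rule arg_cong[where f=exp]) simp
  then have "exp ((d/2) * T) = exp (d * T) * exp (- (d/2) * T)" by (simp only: exp_add)
  then show ?thesis by simp
qed
lemma m66: fixes a :: real and X Y :: ennreal assumes "ennreal (exp a) * X \<le> ennreal (exp a) * Y" shows "X \<le> Y"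
  using assms ennreal_mult_le_mult_iff[of "ennreal (exp a)" X Y] by simp
lemma m69: fixes c d T eta :: real assumes "2 * (ln c - ln eta) / d \<le> T" "d > 0" shows "ln c - d/2 * T \<le> ln eta"
proof -
  have "2 * (ln c - ln eta) \<le> T * d" using assms by (simp add: divide_le_eq)
  then show ?thesis by (simp add: algebra_simps)
qed
lemma m77: fixes A :: ennreal assumes "\<And>e::real. e > 0 \<Longrightarrow> A \<le> 0 + ennreal e" shows "A = 0"
proof -
  have "A \<le> 0" by (rule ennreal_le_epsilon) (use assms in auto)
  then show ?thesis by simp
qed

lemma Tinf: "filterlim (\<lambda>n. ln (real n)) at_top sequentially"
  by (rule filterlim_compose[OF ln_at_top filterlim_real_sequentially])

lemma part1_AE:
  fixes g :: "nat \<Rightarrow> real \<Rightarrow> real" and \<alpha> :: "real \<Rightarrow> real"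
  assumes meas[measurable]: "\<alpha> \<in> borel_measurable borel"
    and dens: "\<forall>n. is_prob_density (g n)" and uc: "unif_conv g \<alpha>"
  shows "AE u in lborel. \<alpha> u \<le> u\<^sup>2"
proof -
  define c where "c = sqrt (2*pi)"
  have c: "c > 0" unfolding c_def by simp
  have small: "AE u in lborel. \<alpha> u - u\<^sup>2 \<le> \<delta>" if d: "\<delta> > 0" for \<delta>
  proof -
    define A where "A = {u. \<delta> < \<alpha> u - u\<^sup>2}"
    have Am[measurable]: "A \<in> sets lborel" unfolding A_def by measurable
    have "emeasure lborel A \<le> 0 + ennreal \<eta>" if eta: "\<eta> > 0" for \<eta>
    proof -
      obtain N where N: "\<And>n. n \<ge> N \<Longrightarrow> n \<ge> 3 \<and> integrable lborel (\<lambda>u. exp (ln (real n) * (\<alpha> u - u\<^sup>2))) \<and>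
        (\<integral>u. exp (ln (real n) * (\<alpha> u - u\<^sup>2)) \<partial>lborel)
          \<le> sqrt (2*pi) * exp ((\<delta>/2) * ln (real n)) / sqrt (2 * ln (real n))"
        using part1_bounds[OF meas dens uc, of "\<delta>/2"] d by auto
      define M where "M = 2 * (ln c - ln \<eta>) / \<delta>"
      have "\<forall>\<^sub>F n in sequentially. M \<le> ln (real n)" using Tinf by (simp add: filterlim_at_top)
      then obtain N2 where N2: "\<And>n. n \<ge> N2 \<Longrightarrow> M \<le> ln (real n)" unfolding eventually_sequentially by blast
      define n where "n = max N N2"
      define T where "T = ln (real n)"
      have Nn: "n \<ge> 3" "integrable lborel (\<lambda>u. exp (T * (\<alpha> u - u\<^sup>2)))"
        "(\<integral>u. exp (T * (\<alpha> u - u\<^sup>2)) \<partial>lborel) \<le> c * exp ((\<delta>/2) * T) / sqrt (2 * T)"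
        using N[of n] unfolding n_def T_def c_def by auto
      have MT: "M \<le> T" using N2[of n] unfolding n_def T_def by auto
      have n3: "real n \<ge> 3" using Nn by simp
      then have "ln (real n) \<ge> ln 3" by simp
      then have T1: "T > 1" unfolding T_def using ln3_gt_1 by linarith
      have S1: "sqrt (2*T) \<ge> 1" using T1 by simp
      have Fup: "(\<integral>u. exp (T * (\<alpha> u - u\<^sup>2)) \<partial>lborel) \<le> c * exp ((\<delta>/2) * T)"
      proof -
        have "c * exp ((\<delta>/2) * T) / sqrt (2 * T) \<le> c * exp ((\<delta>/2) * T) / 1"
          by (rule divide_left_mono) (use S1 c in auto)
        then show ?thesis using Nn(3) by simp
      qed
      have "ennreal (exp (\<delta> * T)) * emeasure lborel A = (\<integral>\<^sup>+ u. ennreal (exp (\<delta> * T)) * indicator A u \<partial>lborel)"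
        by (rule nn_integral_cmult_indicator[symmetric, OF Am])
      also have "\<dots> \<le> (\<integral>\<^sup>+ u. ennreal (exp (T * (\<alpha> u - u\<^sup>2))) \<partial>lborel)"
      proof (rule nn_integral_mono)
        fix u show "ennreal (exp (\<delta> * T)) * indicator A u \<le> ennreal (exp (T * (\<alpha> u - u\<^sup>2)))"
        proof (cases "u \<in> A")
          case True
          then have "\<delta> * T \<le> T * (\<alpha> u - u\<^sup>2)" using T1 unfolding A_def
            by (simp add: mult.commute)
          then show ?thesis using True by simp
        qed simp
      qed
      also have "\<dots> = ennreal (\<integral>u. exp (T * (\<alpha> u - u\<^sup>2)) \<partial>lborel)"
        by (rule nn_integral_eq_integral[OF Nn(2)]) simp
      also have "\<dots> \<le> ennreal (c * exp ((\<delta>/2) * T))" using Fup by (rule ennreal_leI)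
      finally have E: "ennreal (exp (\<delta> * T)) * emeasure lborel A \<le> ennreal (c * exp ((\<delta>/2) * T))" .
      have eqc: "c * exp ((\<delta>/2) * T) = exp (\<delta> * T) * (c * exp (- (\<delta>/2) * T))"
        by (rule eqc)
      have em: "ennreal (exp (\<delta> * T)) * ennreal (c * exp (- (\<delta>/2) * T)) = ennreal (exp (\<delta> * T) * (c * exp (- (\<delta>/2) * T)))"
        by (rule ennreal_mult[symmetric]) (use c in auto)
      have "ennreal (exp (\<delta> * T)) * emeasure lborel A \<le> ennreal (exp (\<delta> * T)) * ennreal (c * exp (- (\<delta>/2) * T))"
        using E unfolding em eqc[symmetric] .
      then have E2: "emeasure lborel A \<le> ennreal (c * exp (- (\<delta>/2) * T))"
        by (rule m66)
      have "c * exp (- (\<delta>/2) * T) \<le> \<eta>"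
      proof -
        have "ln c - \<delta>/2 * T \<le> ln \<eta>" using MT d unfolding M_def by (rule m69)
        then have "exp (ln c - \<delta>/2 * T) \<le> exp (ln \<eta>)" by (simp only: exp_le_cancel_iff)
        also have "exp (ln \<eta>) = \<eta>" using eta by (rule exp_ln)
        finally have 1: "exp (ln c - \<delta>/2 * T) \<le> \<eta>" .
        have "exp (ln c - \<delta>/2 * T) = exp (ln c) * exp (- (\<delta>/2) * T)"
          by (simp only: exp_add[symmetric]) simp
        also have "exp (ln c) = c" using c by (rule exp_ln)
        finally show ?thesis using 1 by simp
      qed
      then have "ennreal (c * exp (- (\<delta>/2) * T)) \<le> ennreal \<eta>" by (rule ennreal_leI)
      with E2 have "emeasure lborel A \<le> ennreal \<eta>" by (rule order.trans)
      then show ?thesis by simp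
    qed
    then have A0: "emeasure lborel A = 0" by (rule m77)
    have setA: "{x \<in> space lborel. \<not> (\<alpha> x - x\<^sup>2 \<le> \<delta>)} = A"
      by (auto simp: A_def)
    show ?thesis by (rule AE_iff_measurable[OF Am setA, THEN iffD2]) (rule A0)
  qed
  have "AE u in lborel. \<forall>k::nat. \<alpha> u - u\<^sup>2 \<le> 1 / real (Suc k)"
    unfolding AE_all_countable by (intro allI small) simp
  then show ?thesis
  proof (rule eventually_mono)
    fix u assume H: "\<forall>k::nat. \<alpha> u - u\<^sup>2 \<le> 1 / real (Suc k)"
    show "\<alpha> u \<le> u\<^sup>2"
    proof (rule ccontr)
      assume "\<not> ?thesis"
      then have p: "\<alpha> u - u\<^sup>2 > 0" by simp
      obtain k where k: "inverse (real (Suc k)) < \<alpha> u - u\<^sup>2"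
        using reals_Archimedean[OF p] by blast
      have "\<alpha> u - u\<^sup>2 \<le> inverse (real (Suc k))" using H by (simp add: inverse_eq_divide)
      with k show False by linarith
    qed
  qed
qed



lemma asy1: "((\<lambda>t::real. (a - e*(t+1) - ln (sqrt (2*(t+1)))) / t) \<longlongrightarrow> - e) at_top" by real_asymp
lemma asy2: "((\<lambda>t::real. (a + e*t) / t) \<longlongrightarrow> e) at_top" by real_asymp

lemma mono_F:
  fixes \<alpha> :: "real \<Rightarrow> real"
  assumes meas[measurable]: "\<alpha> \<in> borel_measurable borel"
    and ae: "AE u in lborel. \<alpha> u \<le> u\<^sup>2" and t: "0 \<le> t1" "t1 \<le> t2"
    and I: "integrable lborel (\<lambda>u. exp (t1 * (\<alpha> u - u\<^sup>2)))"
  shows "integrable lborel (\<lambda>u. exp (t2 * (\<alpha> u - u\<^sup>2)))"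
    "(\<integral>u. exp (t2 * (\<alpha> u - u\<^sup>2)) \<partial>lborel) \<le> (\<integral>u. exp (t1 * (\<alpha> u - u\<^sup>2)) \<partial>lborel)"
proof -
  have pw: "AE u in lborel. exp (t2 * (\<alpha> u - u\<^sup>2)) \<le> exp (t1 * (\<alpha> u - u\<^sup>2))"
    using ae
  proof (rule eventually_mono)
    fix u assume "\<alpha> u \<le> u\<^sup>2"
    then have "t2 * (\<alpha> u - u\<^sup>2) \<le> t1 * (\<alpha> u - u\<^sup>2)"
      using t by (intro mult_right_mono_neg) auto
    then show "exp (t2 * (\<alpha> u - u\<^sup>2)) \<le> exp (t1 * (\<alpha> u - u\<^sup>2))" by simp
  qed
  show I2: "integrable lborel (\<lambda>u. exp (t2 * (\<alpha> u - u\<^sup>2)))"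
    apply (rule Bochner_Integration.integrable_bound[OF I])
     apply measurable
    using pw by (rule eventually_mono) simp
  show "(\<integral>u. exp (t2 * (\<alpha> u - u\<^sup>2)) \<partial>lborel) \<le> (\<integral>u. exp (t1 * (\<alpha> u - u\<^sup>2)) \<partial>lborel)"
    by (rule integral_mono_AE[OF I2 I pw])
qed

lemma part1_claim:
  fixes g :: "nat \<Rightarrow> real \<Rightarrow> real" and \<alpha> :: "real \<Rightarrow> real"
  assumes meas[measurable]: "\<alpha> \<in> borel_measurable borel"
    and dens: "\<forall>n. is_prob_density (g n)" and uc: "unif_conv g \<alpha>" and e: "\<epsilon> > 0"
  shows "\<exists>t0>0. \<forall>t\<ge>t0. integrable lborel (\<lambda>u. exp (t * (\<alpha> u - u\<^sup>2))) \<and>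
     ln (sqrt (2*pi)) - \<epsilon>*(t+1) - ln (sqrt (2*(t+1))) \<le> ln (\<integral>u. exp (t * (\<alpha> u - u\<^sup>2)) \<partial>lborel) \<and>
     ln (\<integral>u. exp (t * (\<alpha> u - u\<^sup>2)) \<partial>lborel) \<le> ln (sqrt (2*pi)) + \<epsilon>*t"
proof -
  define c where "c = sqrt (2*pi)"
  have c: "c > 0" unfolding c_def by simp
  have ae: "AE u in lborel. \<alpha> u \<le> u\<^sup>2" by (rule part1_AE[OF meas dens uc])
  obtain N where N: "\<And>n. n \<ge> N \<Longrightarrow> n \<ge> 3 \<and> integrable lborel (\<lambda>u. exp (ln (real n) * (\<alpha> u - u\<^sup>2))) \<and>
      c * exp (- \<epsilon> * ln (real n)) / sqrt (2 * ln (real n))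
        \<le> (\<integral>u. exp (ln (real n) * (\<alpha> u - u\<^sup>2)) \<partial>lborel) \<and>
      (\<integral>u. exp (ln (real n) * (\<alpha> u - u\<^sup>2)) \<partial>lborel)
        \<le> c * exp (\<epsilon> * ln (real n)) / sqrt (2 * ln (real n))"
    using part1_bounds[OF meas dens uc e] unfolding c_def by blast
  define t0 where "t0 = ln (real N + 3)"
  have t0: "t0 > 0" unfolding t0_def by simp
  show ?thesis
  proof (intro exI[of _ t0] conjI allI impI t0)
    fix t assume tt: "t0 \<le> t"
    then have t0': "0 < t" using t0 by linarith
    define F where "F s = (\<integral>u. exp (s * (\<alpha> u - u\<^sup>2)) \<partial>lborel)" for s
    define n where "n = nat \<lfloor>exp t\<rfloor>"
    have "exp t0 = real N + 3" unfolding t0_def by simp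
    moreover have "exp t0 \<le> exp t" using tt by simp
    ultimately have et: "exp t \<ge> real N + 3" by simp
    have nle: "real n \<le> exp t" unfolding n_def by simp
    have ngt: "exp t < real n + 1" unfolding n_def by linarith
    have nN: "real n \<ge> real N + 2" using et ngt by linarith
    then have nN': "n \<ge> N" "n + 1 \<ge> N" by auto
    define T1 where "T1 = ln (real n)"
    define T2 where "T2 = ln (real (n+1))"
    have n3: "real n \<ge> 3" using N[OF nN'(1)] by simp
    then have "ln (real n) \<ge> ln 3" by simp
    then have T1g: "T1 > 1" unfolding T1_def using ln3_gt_1 by linarith
    have "ln (real n) \<le> ln (exp t)" using nle n3 by (subst ln_le_cancel_iff) auto
    then have T1t: "T1 \<le> t" unfolding T1_def by simp
    have "ln (exp t) \<le> ln (real (n+1))" using ngt by (subst ln_le_cancel_iff) auto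
    then have T2t: "t \<le> T2" unfolding T2_def by simp
    have T2t1: "T2 \<le> t + 1"
    proof -
      have "exp (1::real) \<ge> 2" using exp_ge_add_one_self[of "1::real"] by simp
      moreover have "exp t \<ge> 1" using t0' by simp
      ultimately have "2 * exp t \<le> exp 1 * exp t" by (intro mult_right_mono) auto
      moreover have "real (n+1) \<le> 2 * exp t" using nle \<open>exp t \<ge> 1\<close> by (simp only: of_nat_add of_nat_1)
      ultimately have "real (n+1) \<le> exp 1 * exp t" by linarith
      also have "\<dots> = exp (t + 1)" by (simp add: exp_add)
      finally have "real (n+1) \<le> exp (t+1)" .
      then have "ln (real (n+1)) \<le> ln (exp (t+1))" by (subst ln_le_cancel_iff) auto
      then show ?thesis unfolding T2_def by simp
    qed
    have B1: "integrable lborel (\<lambda>u. exp (T1 * (\<alpha> u - u\<^sup>2)))" "F T1 \<le> c * exp (\<epsilon> * T1) / sqrt (2 * T1)"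
      using N[OF nN'(1)] unfolding T1_def F_def by auto
    have B2: "c * exp (- \<epsilon> * T2) / sqrt (2 * T2) \<le> F T2"
      using N[OF nN'(2)] unfolding T2_def F_def by auto
    have T1pos: "0 \<le> T1" using T1g by simp
    have It: "integrable lborel (\<lambda>u. exp (t * (\<alpha> u - u\<^sup>2)))" and Ft: "F t \<le> F T1"
      using mono_F[OF meas ae T1pos T1t B1(1)] unfolding F_def by auto
    have "0 \<le> t" using t0' by simp
    then have FT2: "F T2 \<le> F t" using mono_F[OF meas ae _ T2t It] unfolding F_def by auto
    have T2g: "T2 > 1" using T1g T1t T2t by linarith
    have lowpos: "0 < c * exp (- \<epsilon> * T2) / sqrt (2 * T2)" using c T2g by simp
    have Fpos: "F t > 0" using lowpos B2 FT2 by linarith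
    have up: "ln (F t) \<le> ln c + \<epsilon> * t"
    proof -
      have "c * exp (\<epsilon> * T1) / sqrt (2 * T1) \<le> c * exp (\<epsilon> * T1) / 1"
        by (rule divide_left_mono) (use T1g c in auto)
      then have "F t \<le> c * exp (\<epsilon> * T1)" using Ft B1(2) by simp
      then have "ln (F t) \<le> ln (c * exp (\<epsilon> * T1))" using Fpos by simp
      also have "\<dots> = ln c + \<epsilon> * T1" using c by (simp add: ln_mult)
      also have "\<dots> \<le> ln c + \<epsilon> * t" using T1t e by simp
      finally show ?thesis .
    qed
    have lo: "ln c - \<epsilon>*(t+1) - ln (sqrt (2*(t+1))) \<le> ln (F t)"
    proof -
      have "ln c - \<epsilon>*(t+1) - ln (sqrt (2*(t+1))) \<le> ln c - \<epsilon> * T2 - ln (sqrt (2 * T2))"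
      proof -
        have "\<epsilon> * T2 \<le> \<epsilon>*(t+1)" using T2t1 e by simp
        moreover have "ln (sqrt (2 * T2)) \<le> ln (sqrt (2*(t+1)))" using T2t1 T2g by simp
        ultimately show ?thesis by linarith
      qed
      also have "\<dots> = ln (c * exp (- \<epsilon> * T2) / sqrt (2 * T2))"
        using c T2g by (simp add: ln_mult ln_div)
      also have "\<dots> \<le> ln (F t)" using lowpos B2 FT2 by simp
      finally show ?thesis .
    qed
    show "integrable lborel (\<lambda>u. exp (t * (\<alpha> u - u\<^sup>2)))" by (rule It)
    show "ln (sqrt (2*pi)) - \<epsilon>*(t+1) - ln (sqrt (2*(t+1))) \<le> ln (\<integral>u. exp (t * (\<alpha> u - u\<^sup>2)) \<partial>lborel)"
      using lo unfolding F_def c_def .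
    show "ln (\<integral>u. exp (t * (\<alpha> u - u\<^sup>2)) \<partial>lborel) \<le> ln (sqrt (2*pi)) + \<epsilon>*t"
      using up unfolding F_def c_def .
  qed
qed


lemma part1:
  fixes g :: "nat \<Rightarrow> real \<Rightarrow> real" and \<alpha> :: "real \<Rightarrow> real"
  assumes meas[measurable]: "\<alpha> \<in> borel_measurable borel"
    and dens: "\<forall>n. is_prob_density (g n)" and uc: "unif_conv g \<alpha>"
  shows "int_limit \<alpha> \<and> (AE u in lborel. \<alpha> u \<le> u\<^sup>2)"
proof -
  define a where "a = ln (sqrt (2*pi))"
  define F where "F t = (\<integral>u. exp (t * (\<alpha> u - u\<^sup>2)) \<partial>lborel)" for t
  have ev: "\<forall>\<^sub>F t in at_top. integrable lborel (\<lambda>u. exp (t * (\<alpha> u - u\<^sup>2)))"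
  proof -
    obtain t0 where "\<forall>t\<ge>t0. integrable lborel (\<lambda>u. exp (t * (\<alpha> u - u\<^sup>2)))"
      using part1_claim[OF meas dens uc, of 1] by auto
    then show ?thesis unfolding eventually_at_top_linorder by blast
  qed
  have lim: "((\<lambda>t. ln (F t) / t) \<longlongrightarrow> 0) at_top"
  proof (rule tendstoI)
    fix e :: real assume e: "e > 0"
    define \<epsilon> where "\<epsilon> = e / 4"
    have eps: "\<epsilon> > 0" using e unfolding \<epsilon>_def by simp
    obtain t0 where t0: "t0 > 0" and T0: "\<And>t. t \<ge> t0 \<Longrightarrow>
       a - \<epsilon>*(t+1) - ln (sqrt (2*(t+1))) \<le> ln (F t) \<and> ln (F t) \<le> a + \<epsilon>*t"
      using part1_claim[OF meas dens uc eps] unfolding a_def F_def by blast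
    have e1: "\<forall>\<^sub>F t in at_top. - e < (a - \<epsilon>*(t+1) - ln (sqrt (2*(t+1)))) / t"
      by (rule order_tendstoD(1)[OF asy1]) (use e in \<open>simp add: \<epsilon>_def\<close>)
    have e2: "\<forall>\<^sub>F t in at_top. (a + \<epsilon>*t) / t < e"
      by (rule order_tendstoD(2)[OF asy2]) (use e in \<open>simp add: \<epsilon>_def\<close>)
    have e3: "\<forall>\<^sub>F t in at_top. t \<ge> t0" by (rule eventually_ge_at_top)
    have "\<forall>\<^sub>F t in at_top. - e < (a - \<epsilon>*(t+1) - ln (sqrt (2*(t+1)))) / t \<and> (a + \<epsilon>*t) / t < e \<and> t \<ge> t0"
      using e1 e2 e3 by (intro eventually_conj)
    then show "\<forall>\<^sub>F t in at_top. dist (ln (F t) / t) 0 < e"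
    proof (rule eventually_mono)
      fix t assume H: "- e < (a - \<epsilon>*(t+1) - ln (sqrt (2*(t+1)))) / t \<and> (a + \<epsilon>*t) / t < e \<and> t \<ge> t0"
      then have tp: "t > 0" using t0 by linarith
      have B: "a - \<epsilon>*(t+1) - ln (sqrt (2*(t+1))) \<le> ln (F t)" "ln (F t) \<le> a + \<epsilon>*t" using T0 H by auto
      have "(a - \<epsilon>*(t+1) - ln (sqrt (2*(t+1)))) / t \<le> ln (F t) / t"
        by (rule divide_right_mono[OF B(1)]) (use tp in simp)
      moreover have "ln (F t) / t \<le> (a + \<epsilon>*t) / t"
        by (rule divide_right_mono[OF B(2)]) (use tp in simp)
      ultimately have "- e < ln (F t) / t \<and> ln (F t) / t < e" using H by linarith
      then show "dist (ln (F t) / t) 0 < e" unfolding dist_real_def diff_zero abs_less_iff by linarith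
    qed
  qed
  show ?thesis
    using ev lim part1_AE[OF meas dens uc] unfolding int_limit_def F_def by auto
qed



lemma asy3: "((\<lambda>n. b / ln (real n)) \<longlongrightarrow> 0) sequentially" by real_asymp
lemma asy4: "((\<lambda>n. ln (sqrt (2*ln (real n))) / ln (real n)) \<longlongrightarrow> 0) sequentially" by real_asymp

lemma std_dens: "is_prob_density std_normal_density"
proof -
  have "emeasure (density lborel (\<lambda>x. ennreal (std_normal_density x))) (space (density lborel (\<lambda>x. ennreal (std_normal_density x)))) = 1"
    by (rule prob_space.emeasure_space_1[OF prob_space_normal_density]) simp
  then have "(\<integral>\<^sup>+ x. ennreal (std_normal_density x) * indicator UNIV x \<partial>lborel) = 1"
    by (subst (asm) emeasure_density) auto
  then show ?thesis unfolding is_prob_density_def by simp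
qed

lemma F_pos:
  fixes f :: "real \<Rightarrow> real"
  assumes "integrable lborel (\<lambda>u. exp (f u))"
  shows "(\<integral>u. exp (f u) \<partial>lborel) > 0"
proof -
  have nn: "0 \<le> (\<integral>u. exp (f u) \<partial>lborel)" by (rule integral_nonneg_AE) simp
  have "(\<integral>u. exp (f u) \<partial>lborel) \<noteq> 0"
  proof
    assume "(\<integral>u. exp (f u) \<partial>lborel) = 0"
    then have "AE u in lborel. exp (f u) = 0"
      using integral_nonneg_eq_0_iff_AE[OF assms] by simp
    then have "AE u::real in lborel. False" by simp
    then have "ae_filter (lborel::real measure) = bot" by (simp add: trivial_limit_def)
    then have "emeasure (lborel::real measure) (space lborel) = 0" by (simp only: ae_filter_eq_bot_iff)
    then show False by simp
  qed
  with nn show ?thesis by linarith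
qed

lemma part2:
  fixes \<alpha> :: "real \<Rightarrow> real"
  assumes meas[measurable]: "\<alpha> \<in> borel_measurable borel" and il: "int_limit \<alpha>"
  shows "\<exists>g :: nat \<Rightarrow> real \<Rightarrow> real. (\<forall>n. is_prob_density (g n)) \<and> unif_conv g \<alpha>"
proof -
  define T where "T n = ln (real n)" for n :: nat
  define S where "S n = sqrt (2 * T n)" for n
  define c where "c = sqrt (2*pi)"
  define F where "F t = (\<integral>u. exp (t * (\<alpha> u - u\<^sup>2)) \<partial>lborel)" for t
  define Ok where "Ok n \<longleftrightarrow> n \<ge> 3 \<and> integrable lborel (\<lambda>u. exp (T n * (\<alpha> u - u\<^sup>2)))" for n
  define K where "K n = c / (S n * F (T n))" for n
  define g where "g n x = (if Ok n then K n * std_normal_density x * exp (T n * \<alpha> (x / S n))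
      else std_normal_density x)" for n x
  have c: "c > 0" unfolding c_def by simp
  have OkT: "T n > 1" "S n > 0" "F (T n) > 0" "K n > 0" if "Ok n" for n
  proof -
    have n3: "real n \<ge> 3" using that unfolding Ok_def by simp
    then have "ln (real n) \<ge> ln 3" by simp
    then show T1: "T n > 1" unfolding T_def using ln3_gt_1 by linarith
    then show S: "S n > 0" unfolding S_def by simp
    show F: "F (T n) > 0" unfolding F_def using that unfolding Ok_def by (intro F_pos) auto
    show "K n > 0" unfolding K_def using c S F by simp
  qed
  have gS: "g n (S n * u) = K n / c * exp (T n * (\<alpha> u - u\<^sup>2))" if "Ok n" for n u
  proof -
    have T: "T n > 1" and S: "S n > 0" using OkT[OF that] by auto
    have sq: "(S n * u)\<^sup>2 / 2 = T n * u\<^sup>2"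
      unfolding S_def using T by (simp add: power_mult_distrib)
    have "g n (S n * u) = K n * (exp (- (T n * u\<^sup>2)) / c) * exp (T n * \<alpha> u)"
      unfolding g_def using that S sq by (simp add: std_normal_density_def c_def)
    also have "\<dots> = K n / c * (exp (T n * \<alpha> u) * exp (- (T n * u\<^sup>2)))" by simp
    also have "exp (T n * \<alpha> u) * exp (- (T n * u\<^sup>2)) = exp (T n * (\<alpha> u - u\<^sup>2))"
      by (simp only: exp_add[symmetric] distrib_left mult_minus_right diff_conv_add_uminus)
    finally show ?thesis .
  qed
  have dens: "is_prob_density (g n)" for n
  proof (cases "Ok n")
    case False
    then have "g n = std_normal_density" unfolding g_def by auto
    then show ?thesis using std_dens by simp
  next
    case True
    note O = OkT[OF True]
    have gm[measurable]: "g n \<in> borel_measurable borel" unfolding g_def using True by simp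
    have gnn: "0 \<le> g n x" for x unfolding g_def using True O by simp
    have I: "integrable lborel (\<lambda>u. exp (T n * (\<alpha> u - u\<^sup>2)))" using True unfolding Ok_def by simp
    have "(\<integral>\<^sup>+ x. ennreal (g n x) \<partial>lborel) = \<bar>S n\<bar> * (\<integral>\<^sup>+ x. ennreal (g n (0 + S n * x)) \<partial>lborel)"
      by (rule nn_integral_real_affine) (use O in auto)
    also have "(\<integral>\<^sup>+ x. ennreal (g n (0 + S n * x)) \<partial>lborel)
        = (\<integral>\<^sup>+ x. ennreal (K n / c) * ennreal (exp (T n * (\<alpha> x - x\<^sup>2))) \<partial>lborel)"
      using gS[OF True] O c by (intro nn_integral_cong) (simp add: ennreal_mult[symmetric])
    also have "\<dots> = ennreal (K n / c) * (\<integral>\<^sup>+ x. ennreal (exp (T n * (\<alpha> x - x\<^sup>2))) \<partial>lborel)"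
      by (rule nn_integral_cmult) simp
    also have "(\<integral>\<^sup>+ x. ennreal (exp (T n * (\<alpha> x - x\<^sup>2))) \<partial>lborel) = ennreal (F (T n))"
      unfolding F_def by (rule nn_integral_eq_integral[OF I]) simp
    also have "ennreal \<bar>S n\<bar> * (ennreal (K n / c) * ennreal (F (T n))) = ennreal (S n * (K n / c * F (T n)))"
      using O c by (simp add: ennreal_mult[symmetric])
    also have "S n * (K n / c * F (T n)) = 1" unfolding K_def using O c by (simp add: field_simps)
    finally show ?thesis unfolding is_prob_density_def using gnn by simp
  qed
  have evOk: "\<forall>\<^sub>F n in sequentially. Ok n"
  proof -
    obtain t0 where t0: "\<And>t. t \<ge> t0 \<Longrightarrow> integrable lborel (\<lambda>u. exp (t * (\<alpha> u - u\<^sup>2)))"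
      using il unfolding int_limit_def eventually_at_top_linorder by blast
    have "\<forall>\<^sub>F n in sequentially. t0 \<le> T n" using Tinf unfolding T_def by (simp add: filterlim_at_top)
    moreover have "\<forall>\<^sub>F n in sequentially. n \<ge> 3" by (rule eventually_ge_at_top)
    ultimately show ?thesis unfolding Ok_def by eventually_elim (use t0 in auto)
  qed
  have limF: "((\<lambda>n. ln (F (T n)) / T n) \<longlongrightarrow> 0) sequentially"
  proof -
    have "((\<lambda>t. ln (F t) / t) \<longlongrightarrow> 0) at_top" using il unfolding int_limit_def F_def by simp
    from filterlim_compose[OF this Tinf] show ?thesis unfolding T_def by (simp add: o_def)
  qed
  have limK: "((\<lambda>n. ln c / T n - ln (S n) / T n - ln (F (T n)) / T n) \<longlongrightarrow> 0 - 0 - 0) sequentially"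
    by (intro tendsto_diff limF) (use asy3 asy4 in \<open>simp_all add: T_def S_def\<close>)
  have uc: "unif_conv g \<alpha>"
    unfolding unif_conv_def
  proof (intro allI impI)
    fix \<epsilon> :: real assume e: "\<epsilon> > 0"
    have "\<forall>\<^sub>F n in sequentially. dist (ln c / T n - ln (S n) / T n - ln (F (T n)) / T n) 0 < \<epsilon>"
      using limK e by (simp add: tendsto_iff)
    with evOk show "\<forall>\<^sub>F n in sequentially. \<forall>u::real.
      g n (u * sqrt (2 * ln (real n))) > 0 \<and>
      \<bar>llr (g n) (u * sqrt (2 * ln (real n))) / ln (real n) - \<alpha> u\<bar> < \<epsilon>"
    proof eventually_elim
      case (elim n)
      note O = OkT[OF elim(1)]
      show ?case
      proof
        fix u :: real
        have sq: "u * sqrt (2 * ln (real n)) = S n * u" unfolding S_def T_def by simp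
        have gv: "g n (S n * u) = K n / c * exp (T n * (\<alpha> u - u\<^sup>2))" by (rule gS[OF elim(1)])
        have pos: "g n (S n * u) > 0" using gv O c by simp
        have phi: "std_normal_density (S n * u) > 0" by (simp add: normal_density_pos)
        have "g n (S n * u) / std_normal_density (S n * u) = K n * exp (T n * \<alpha> u)"
          unfolding g_def using elim(1) O phi by simp
        then have "llr (g n) (S n * u) = ln (K n) + T n * \<alpha> u"
          unfolding llr_def using O by (simp add: ln_mult)
        then have "llr (g n) (S n * u) / T n - \<alpha> u = ln (K n) / T n"
          using O by (simp add: field_simps)
        also have "ln (K n) = ln c - ln (S n) - ln (F (T n))"
          unfolding K_def using O c by (simp add: ln_div ln_mult)
        finally have "llr (g n) (S n * u) / T n - \<alpha> u = ln c / T n - ln (S n) / T n - ln (F (T n)) / T n"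
          by (simp add: diff_divide_distrib)
        then have "\<bar>llr (g n) (S n * u) / T n - \<alpha> u\<bar> < \<epsilon>" using elim(2) by (simp add: dist_real_def)
        then show "g n (u * sqrt (2 * ln (real n))) > 0 \<and>
          \<bar>llr (g n) (u * sqrt (2 * ln (real n))) / ln (real n) - \<alpha> u\<bar> < \<epsilon>"
          using pos unfolding sq by (simp add: T_def)
      qed
    qed
  qed
  show ?thesis using dens uc by blast
qed



lemma part3:
  fixes g :: "nat \<Rightarrow> real \<Rightarrow> real" and \<alpha> :: "real \<Rightarrow> real" and P :: "nat \<Rightarrow> real measure"
  assumes PP: "\<forall>n. prob_space (P n) \<and> sets (P n) = sets borel"
    and gP: "\<forall>n x. g n x = (\<integral>y. std_normal_density (x - y) \<partial>P n)"
    and uc: "unif_conv g \<alpha>"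
  shows "convex_on UNIV \<alpha>"
proof (rule convex_onI)
  show "convex (UNIV :: real set)" by simp
  fix t x y :: real assume t: "0 < t" "t < 1"
  show "\<alpha> ((1 - t) *\<^sub>R x + t *\<^sub>R y) \<le> (1 - t) * \<alpha> x + t * \<alpha> y"
  proof (rule field_le_epsilon)
    fix e :: real assume e: "0 < e"
    define \<epsilon> where "\<epsilon> = e / 3"
    have eps: "\<epsilon> > 0" unfolding \<epsilon>_def using e by simp
    from uc eps obtain N where N: "\<And>n u. n \<ge> N \<Longrightarrow>
        \<bar>llr (g n) (u * sqrt (2 * ln (real n))) / ln (real n) - \<alpha> u\<bar> < \<epsilon>"
      unfolding unif_conv_def eventually_sequentially by blast
    define n where "n = max N 3"
    define L where "L = ln (real n)"
    define s where "s = sqrt (2 * L)"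
    have n3: "real n \<ge> 3" unfolding n_def by simp
    then have "ln (real n) \<ge> ln 3" by simp
    then have L1: "L > 1" unfolding L_def using ln3_gt_1 by linarith
    define a where "a z = llr (g n) (z * s) / L" for z
    have close: "\<bar>a z - \<alpha> z\<bar> < \<epsilon>" for z
      using N[of n z] unfolding a_def s_def L_def n_def by simp
    define z where "z = (1 - t) * x + t * y"
    have conv: "llr (g n) ((1-t) * (x * s) + t * (y * s)) \<le> (1-t) * llr (g n) (x * s) + t * llr (g n) (y * s)"
      using llr_convex_step[of "P n" "g n" t] PP gP t by auto
    have "z * s = (1-t) * (x * s) + t * (y * s)" unfolding z_def by (simp add: algebra_simps)
    then have "llr (g n) (z * s) \<le> (1-t) * llr (g n) (x * s) + t * llr (g n) (y * s)" using conv by simp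
    then have "llr (g n) (z * s) / L \<le> ((1-t) * llr (g n) (x * s) + t * llr (g n) (y * s)) / L"
      by (rule divide_right_mono) (use L1 in simp)
    then have az: "a z \<le> (1-t) * a x + t * a y" unfolding a_def by (simp add: add_divide_distrib)
    have cz: "\<alpha> z < a z + \<epsilon>" using close[of z] by linarith
    have cx: "(1-t) * a x \<le> (1-t) * (\<alpha> x + \<epsilon>)" using close[of x] t by (intro mult_left_mono) auto
    have cy: "t * a y \<le> t * (\<alpha> y + \<epsilon>)" using close[of y] t by (intro mult_left_mono) auto
    have "\<alpha> z \<le> (1-t) * \<alpha> x + t * \<alpha> y + ((1-t) * \<epsilon> + t * \<epsilon> + \<epsilon>)"
      using cz az cx cy by (simp add: algebra_simps)
    also have "(1-t) * \<epsilon> + t * \<epsilon> + \<epsilon> = 2 * \<epsilon>" by (simp add: algebra_simps)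
    finally have "\<alpha> z \<le> (1-t) * \<alpha> x + t * \<alpha> y + 2 * \<epsilon>" .
    then show "\<alpha> ((1 - t) *\<^sub>R x + t *\<^sub>R y) \<le> (1 - t) * \<alpha> x + t * \<alpha> y + e"
      unfolding z_def \<epsilon>_def using e by simp
  qed
qed

theorem lemma2:
  fixes \<alpha> :: "real \<Rightarrow> real"
  assumes meas: "\<alpha> \<in> borel_measurable borel"
  shows "(\<forall>g :: nat \<Rightarrow> real \<Rightarrow> real. (\<forall>n. is_prob_density (g n)) \<and> unif_conv g \<alpha> \<longrightarrow>
            int_limit \<alpha> \<and> (AE u in lborel. \<alpha> u \<le> u\<^sup>2))
       \<and> (int_limit \<alpha> \<longrightarrow>
            (\<exists>g :: nat \<Rightarrow> real \<Rightarrow> real. (\<forall>n. is_prob_density (g n)) \<and> unif_conv g \<alpha>))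
       \<and> (\<forall>(g :: nat \<Rightarrow> real \<Rightarrow> real) (P :: nat \<Rightarrow> real measure).
            (\<forall>n. prob_space (P n) \<and> sets (P n) = sets borel) \<and>
            (\<forall>n x. g n x = (\<integral>y. std_normal_density (x - y) \<partial>P n)) \<and>
            unif_conv g \<alpha> \<longrightarrow> convex_on UNIV \<alpha>)"
proof -
  have A: "\<forall>g :: nat \<Rightarrow> real \<Rightarrow> real. (\<forall>n. is_prob_density (g n)) \<and> unif_conv g \<alpha> \<longrightarrow>
            int_limit \<alpha> \<and> (AE u in lborel. \<alpha> u \<le> u\<^sup>2)"
    using part1[OF meas] by blast
  have B: "int_limit \<alpha> \<longrightarrow>
            (\<exists>g :: nat \<Rightarrow> real \<Rightarrow> real. (\<forall>n. is_prob_density (g n)) \<and> unif_conv g \<alpha>)"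
    using part2[OF meas] by blast
  have C: "\<forall>(g :: nat \<Rightarrow> real \<Rightarrow> real) (P :: nat \<Rightarrow> real measure).
            (\<forall>n. prob_space (P n) \<and> sets (P n) = sets borel) \<and>
            (\<forall>n x. g n x = (\<integral>y. std_normal_density (x - y) \<partial>P n)) \<and>
            unif_conv g \<alpha> \<longrightarrow> convex_on UNIV \<alpha>"
    using part3 by blast
  show ?thesis using A B C by blast
qed

end
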